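(* Let $(x,q)\in\mathbf J$. Then $(x,q)$ belongs to the closure $\overline{\mathbf U}$ (in $\mathbb R^2$) of $\mathbf U$ if and only if $$\overline{a_{n+1}(x,q)a_{n+2}(x,q)\ldots}\le \alpha_1(q)\alpha_2(q)\ldots\quad\text{(lexicographically) for every } n\ge1 \text{ with } a_n(x,q)>0.$$
   Context: For real $q>1$ let $\lceil q\rceil$ be the smallest integer $\ge q$ and $A_q=\{0,1,\ldots,\lceil q\rceil-1\}$. An expansion of $x$ in base $q$ is a sequence $(c_i)_{i\ge1}$ with $c_i\in A_q$ and $x=\sum_{i\ge1}c_iq^{-i}$. Let $\mathbf J$ be the set of $(x,q)\in\mathbb R\times(1,\infty)$ such that $x$ has at least one expansion in base $q$; equivalently $q>1$ and $x\in J_q:=[0,(\lceil q\rceil-1)/(q-1)]$. Let $\mathbf U$ be the set of $(x,q)\in\mathbf J$ such that $x$ has exactly one expansion in base $q$. For $(x,q)\in\mathbf J$, the quasi-greedy expansion $(a_i(x,q))$ is defined as follows: if $x=0$ it is $0^\infty$; if $x>0$ and $a_1(x,q),\ldots,a_{n-1}(x,q)$ are defined, $a_n(x,q)$ is the largest element of $A_q$ with $\sum_{i=1}^n a_i(x,q)q^{-i}<x$. Set $\alpha_i(q):=a_i(1,q)$; note $\alpha_1(q)=\lceil q\rceil-1$. The conjugate of a digit is $\overline{a_i(x,q)}:=\alpha_1(q)-a_i(x,q)$, and for a sequence $\overline{c_1c_2\ldots}:=\overline{c_1}\,\overline{c_2}\ldots$. Sequences are compared in the lexicographic order. *)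

theory Defs
  imports "HOL-Analysis.Analysis"
begin

text \<open>Digits are natural numbers; the alphabet A_q = {0,...,ceil q - 1}.
Sequences (c_1 c_2 ...) are represented 0-based as functions c :: nat => nat
with c i standing for c_(i+1).\<close>

definition digmax :: "real \<Rightarrow> nat" where
  "digmax q = nat \<lceil>q\<rceil> - 1"

definition is_expansion :: "real \<Rightarrow> real \<Rightarrow> (nat \<Rightarrow> nat) \<Rightarrow> bool" where
  "is_expansion x q c \<longleftrightarrow> (\<forall>i. c i \<le> digmax q) \<and> ((\<lambda>i. real (c i) / q ^ Suc i) sums x)"

definition setJ :: "(real \<times> real) set" where
  "setJ = {(x, q). q > 1 \<and> 0 \<le> x \<and> x \<le> (of_int \<lceil>q\<rceil> - 1) / (q - 1)}"

definition setU :: "(real \<times> real) set" where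
  "setU = {(x, q). (x, q) \<in> setJ \<and> (\<exists>!c. is_expansion x q c)}"

text \<open>First n digits of the quasi-greedy expansion (list index i = digit i+1).\<close>
fun qg_prefix :: "real \<Rightarrow> real \<Rightarrow> nat \<Rightarrow> nat list" where
  "qg_prefix x q 0 = []"
| "qg_prefix x q (Suc n) =
     (let p = qg_prefix x q n;
          s = (\<Sum>i<n. real (p ! i) / q ^ Suc i)
      in p @ [if x = 0 then 0
              else (GREATEST d. d \<le> digmax q \<and> s + real d / q ^ Suc n < x)])"

text \<open>a_n(x,q) for n \<ge> 1 (value at n = 0 is irrelevant).\<close>
definition qg :: "real \<Rightarrow> real \<Rightarrow> nat \<Rightarrow> nat" where
  "qg x q n = (if n = 0 then 0 else qg_prefix x q n ! (n - 1))"

definition alpha :: "real \<Rightarrow> nat \<Rightarrow> nat" where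
  "alpha q i = qg 1 q i"

definition lex_le :: "(nat \<Rightarrow> nat) \<Rightarrow> (nat \<Rightarrow> nat) \<Rightarrow> bool" where
  "lex_le s t \<longleftrightarrow> s = t \<or> (\<exists>k. (\<forall>i<k. s i = t i) \<and> s k < t k)"

end

theory Submission
  imports Defs
begin


definition MM :: "real \<Rightarrow> real" where "MM q = real (digmax q) / (q - 1)"

definition dig :: "real \<Rightarrow> real \<Rightarrow> nat" where
  "dig q r = (GREATEST d. d \<le> digmax q \<and> real d < q * r)"

fun orb :: "real \<Rightarrow> real \<Rightarrow> nat \<Rightarrow> real" where
  "orb q r 0 = r"
| "orb q r (Suc n) = q * orb q r n - real (dig q (orb q r n))"

definition ds :: "real \<Rightarrow> real \<Rightarrow> nat \<Rightarrow> nat" where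
  "ds q r i = dig q (orb q r i)"

definition val :: "real \<Rightarrow> (nat \<Rightarrow> nat) \<Rightarrow> real" where
  "val q c = (\<Sum>i. real (c i) / q ^ Suc i)"

lemma digmax_real: assumes "q > 1" shows "real (digmax q) = of_int \<lceil>q\<rceil> - 1"
proof -
  have "\<lceil>q\<rceil> > 1" using assms by (simp add: less_ceiling_iff)
  then have "\<lceil>q\<rceil> \<ge> 2" by simp
  then have "nat \<lceil>q\<rceil> \<ge> 1" by (simp add: le_nat_iff)
  then have "real (nat \<lceil>q\<rceil> - 1) = real (nat \<lceil>q\<rceil>) - 1" by (simp add: of_nat_diff)
  moreover have "real (nat \<lceil>q\<rceil>) = of_int \<lceil>q\<rceil>" using \<open>\<lceil>q\<rceil> \<ge> 2\<close> by simp
  ultimately show ?thesis unfolding digmax_def by linarith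
qed

lemma digmax_props: assumes "q > 1"
  shows "real (digmax q) < q" "q \<le> real (digmax q) + 1" "digmax q \<ge> 1"
proof -
  show "real (digmax q) < q" using digmax_real[OF assms] by linarith
  show "q \<le> real (digmax q) + 1" using digmax_real[OF assms] by linarith
  have "\<lceil>q\<rceil> > 1" using assms by (simp add: less_ceiling_iff)
  then show "digmax q \<ge> 1" unfolding digmax_def by linarith
qed

lemma MM_ge1: assumes "q > 1" shows "MM q \<ge> 1"
  using digmax_props[OF assms] assms unfolding MM_def by (simp add: field_simps)

lemma MM_eq: assumes "q > 1" shows "q * MM q - real (digmax q) = MM q"
  using assms unfolding MM_def by (simp add: field_simps)

lemma dig_props:
  assumes "q > 1" "r > 0"
  shows "dig q r \<le> digmax q" "real (dig q r) < q * r"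
        "\<And>d. d \<le> digmax q \<Longrightarrow> real d < q * r \<Longrightarrow> d \<le> dig q r"
proof -
  let ?P = "\<lambda>d. d \<le> digmax q \<and> real d < q * r"
  have P0: "?P 0" using assms by simp
  have "?P (dig q r)" unfolding dig_def by (rule GreatestI_nat[where P="?P", OF P0]) auto
  then show "dig q r \<le> digmax q" "real (dig q r) < q * r" by auto
  show "\<And>d. d \<le> digmax q \<Longrightarrow> real d < q * r \<Longrightarrow> d \<le> dig q r"
    unfolding dig_def by (rule Greatest_le_nat) auto
qed

lemma dig_lt_max:
  assumes "q > 1" "r > 0" "dig q r < digmax q"
  shows "q * r \<le> real (dig q r) + 1"
proof (rule ccontr)
  assume "\<not> ?thesis"
  then have "Suc (dig q r) \<le> dig q r"
    using dig_props(3)[OF assms(1,2), of "Suc (dig q r)"] assms(3) by simp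
  then show False by simp
qed

lemma dig_mono:
  assumes "q > 1" "0 < r" "r \<le> r'"
  shows "dig q r \<le> dig q r'"
proof -
  have "q * r \<le> q * r'" using assms by simp
  have r': "r' > 0" using assms by simp
  show ?thesis using dig_props(3)[OF assms(1) r' dig_props(1)[OF assms(1,2)]] dig_props(2)[OF assms(1,2)] \<open>q * r \<le> q * r'\<close> by linarith
qed

lemma dig_eqI:
  assumes "q > 1" "r > 0" "d \<le> digmax q" "real d < q * r" "d < digmax q \<Longrightarrow> q * r \<le> real d + 1"
  shows "dig q r = d"
proof -
  have "d \<le> dig q r" using dig_props(3)[OF assms(1,2) assms(3,4)] .
  moreover have "dig q r \<le> d"
  proof (rule ccontr)
    assume "\<not> ?thesis"
    then have "d < digmax q" "real d + 1 \<le> real (dig q r)" using dig_props(1)[OF assms(1,2)] by auto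
    then show False using assms(5) dig_props(2)[OF assms(1,2)] by linarith
  qed
  ultimately show ?thesis by simp
qed

lemma orb_bounds:
  assumes "q > 1" "0 < r" "r \<le> MM q"
  shows "0 < orb q r n \<and> orb q r n \<le> MM q"
proof (induction n)
  case 0 then show ?case using assms by simp
next
  case (Suc n)
  let ?o = "orb q r n"
  have p: "0 < ?o" "?o \<le> MM q" using Suc by auto
  have pos: "0 < orb q r (Suc n)" using dig_props(2)[OF assms(1) p(1)] by simp
  show ?case
  proof (cases "dig q ?o < digmax q")
    case True
    then show ?thesis using dig_lt_max[OF assms(1) p(1) True] pos MM_ge1[OF assms(1)] by simp
  next
    case False
    then have "dig q ?o = digmax q" using dig_props(1)[OF assms(1) p(1)] by simp
    then have "orb q r (Suc n) = q * ?o - real (digmax q)" by simp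
    also have "\<dots> \<le> q * MM q - real (digmax q)" using p assms by simp
    also have "\<dots> = MM q" by (rule MM_eq[OF assms(1)])
    finally show ?thesis using pos by simp
  qed
qed

lemma orb_le1:
  assumes "q > 1" "0 < r" "r \<le> MM q" "ds q r n < digmax q"
  shows "orb q r (Suc n) \<le> 1"
  using dig_lt_max[OF assms(1) _ assms(4)[unfolded ds_def]] orb_bounds[OF assms(1-3), of n] by simp

lemma orb_shift: "orb q (orb q r n) k = orb q r (n + k)"
  by (induction k) auto

lemma ds_shift: "ds q (orb q r n) k = ds q r (n + k)"
  unfolding ds_def orb_shift ..

lemma ds_partial:
  assumes "q > 1"
  shows "(\<Sum>i<n. real (ds q r i) / q ^ Suc i) = r - orb q r n / q ^ n"
proof (induction n)
  case 0 then show ?case by simp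
next
  case (Suc n)
  have "(\<Sum>i<Suc n. real (ds q r i) / q ^ Suc i) = r - orb q r n / q ^ n + real (ds q r n) / q ^ Suc n"
    using Suc by simp
  also have "\<dots> = r - orb q r (Suc n) / q ^ Suc n"
    using assms by (simp add: ds_def field_simps)
  finally show ?case .
qed

lemma ds_sums:
  assumes "q > 1" "0 < r" "r \<le> MM q"
  shows "(\<lambda>i. real (ds q r i) / q ^ Suc i) sums r"
proof -
  have lim: "(\<lambda>n. orb q r n / q ^ n) \<longlonglongrightarrow> 0"
  proof (rule Lim_null_comparison[where g = "\<lambda>n. MM q * (1/q) ^ n"])
    have "norm (orb q r n / q ^ n) \<le> MM q * (1 / q) ^ n" for n
    proof -
      have "norm (orb q r n / q ^ n) = orb q r n / q ^ n" using orb_bounds[OF assms, of n] assms(1) by simp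
      also have "\<dots> \<le> MM q / q ^ n" using orb_bounds[OF assms, of n] assms(1) by (simp add: divide_right_mono)
      finally show ?thesis by (simp add: power_divide)
    qed
    then show "\<forall>\<^sub>F n in sequentially. norm (orb q r n / q ^ n) \<le> MM q * (1 / q) ^ n"
      by (intro always_eventually allI)
    show "(\<lambda>n. MM q * (1 / q) ^ n) \<longlonglongrightarrow> 0"
      using assms(1) by (intro tendsto_mult_right_zero LIMSEQ_power_zero) auto
  qed
  have "(\<lambda>n. r - orb q r n / q ^ n) \<longlonglongrightarrow> r - 0"
    by (intro tendsto_diff tendsto_const lim)
  then show ?thesis unfolding sums_def ds_partial[OF assms(1)] by simp
qed

lemma ds_le: assumes "q > 1" "0 < r" "r \<le> MM q" shows "ds q r i \<le> digmax q"
  unfolding ds_def using dig_props(1)[OF assms(1)] orb_bounds[OF assms] by blast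



lemma setJ_iff: "(x, q) \<in> setJ \<longleftrightarrow> q > 1 \<and> 0 \<le> x \<and> x \<le> MM q"
  unfolding setJ_def MM_def using digmax_real by auto

lemma qg_prefix_len: "length (qg_prefix x q n) = n"
  by (induction n) (auto simp: Let_def)

lemma qg_prefix_nth: "i < n \<Longrightarrow> qg_prefix x q n ! i = qg x q (Suc i)"
proof (induction n)
  case 0 then show ?case by simp
next
  case (Suc n)
  show ?case
  proof (cases "i < n")
    case True
    then show ?thesis using Suc qg_prefix_len[of x q n]
      by (simp add: Let_def nth_append)
  next
    case False
    then have "i = n" using Suc by simp
    then show ?thesis unfolding qg_def by simp
  qed
qed

lemma qg_Suc: "qg x q (Suc n) = (if x = 0 then 0 else
   (GREATEST d. d \<le> digmax q \<and> (\<Sum>i<n. real (qg x q (Suc i)) / q ^ Suc i) + real d / q ^ Suc n < x))"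
proof -
  have "qg x q (Suc n) = qg_prefix x q (Suc n) ! n" unfolding qg_def by simp
  also have "\<dots> = (if x = 0 then 0 else
   (GREATEST d. d \<le> digmax q \<and> (\<Sum>i<n. real (qg_prefix x q n ! i) / q ^ Suc i) + real d / q ^ Suc n < x))"
    using qg_prefix_len[of x q n] by (simp add: Let_def nth_append)
  also have "(\<Sum>i<n. real (qg_prefix x q n ! i) / q ^ Suc i) = (\<Sum>i<n. real (qg x q (Suc i)) / q ^ Suc i)"
    by (rule sum.cong) (auto simp: qg_prefix_nth)
  finally show ?thesis .
qed

lemma qg_zero: "qg 0 q (Suc n) = 0"
  using qg_Suc by simp

lemma qg_eq_ds:
  assumes "(x, q) \<in> setJ" "x > 0"
  shows "qg x q (Suc n) = ds q x n"
proof (induction n rule: less_induct)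
  case (less n)
  have q: "q > 1" and xM: "x \<le> MM q" using assms setJ_iff by auto
  have "(\<Sum>i<n. real (qg x q (Suc i)) / q ^ Suc i) = (\<Sum>i<n. real (ds q x i) / q ^ Suc i)"
    by (rule sum.cong) (auto simp: less)
  also have "\<dots> = x - orb q x n / q ^ n" by (rule ds_partial[OF q])
  finally have S: "(\<Sum>i<n. real (qg x q (Suc i)) / q ^ Suc i) = x - orb q x n / q ^ n" .
  have P: "(x - orb q x n / q ^ n + real d / q ^ Suc n < x) \<longleftrightarrow> real d < q * orb q x n" for d
  proof -
    have qp: "q ^ Suc n > 0" using q by simp
    have "(x - orb q x n / q ^ n + real d / q ^ Suc n < x) \<longleftrightarrow> real d / q ^ Suc n < orb q x n / q ^ n" by linarith
    also have "\<dots> \<longleftrightarrow> real d < q * orb q x n"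
      using q by (simp add: field_simps)
    finally show ?thesis .
  qed
  have "qg x q (Suc n) = (GREATEST d. d \<le> digmax q \<and> (\<Sum>i<n. real (qg x q (Suc i)) / q ^ Suc i) + real d / q ^ Suc n < x)"
    using qg_Suc[of x q n] assms(2) by simp
  also have "\<dots> = (GREATEST d. d \<le> digmax q \<and> real d < q * orb q x n)" unfolding S P ..
  finally show ?case unfolding ds_def dig_def .
qed

lemma alpha_eq_ds:
  assumes "q > 1" shows "alpha q (Suc i) = ds q 1 i"
  unfolding alpha_def using qg_eq_ds[of 1 q i] assms MM_ge1[OF assms] setJ_iff by auto

lemma dig_one: assumes "q > 1" shows "dig q 1 = digmax q"
  using dig_eqI[OF assms, of 1 "digmax q"] digmax_props[OF assms] by simp

lemma alpha_one: assumes "q > 1" shows "alpha q 1 = digmax q"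
  using alpha_eq_ds[OF assms, of 0] dig_one[OF assms] by (simp add: ds_def)



lemma geom_sums: fixes q :: real assumes "q > 1" shows "(\<lambda>i. 1 / q ^ Suc i) sums (1 / (q - 1))"
proof -
  have "norm (1/q) < 1" using assms by simp
  then have "(\<lambda>i. (1/q) ^ i) sums (1 / (1 - 1/q))" by (rule geometric_sums)
  then have "(\<lambda>i. (1/q) * (1/q) ^ i) sums ((1/q) * (1 / (1 - 1/q)))" by (rule sums_mult)
  moreover have "(1/q) * (1 / (1 - 1/q)) = 1 / (q - 1)" using assms by (simp add: field_simps)
  ultimately show ?thesis by (simp add: power_divide)
qed

lemma const_sums: assumes "q > 1" shows "(\<lambda>i. real (digmax q) / q ^ Suc i) sums MM q"
  using sums_mult[OF geom_sums[OF assms], of "real (digmax q)"] unfolding MM_def by simp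

lemma val_summable:
  assumes "q > 1" "\<And>i. c i \<le> digmax q"
  shows "summable (\<lambda>i. real (c i) / q ^ Suc i)"
proof (rule summable_comparison_test'[where g = "\<lambda>i. real (digmax q) / q ^ Suc i"])
  show "summable (\<lambda>i. real (digmax q) / q ^ Suc i)" using const_sums[OF assms(1)] by (rule sums_summable)
  show "norm (real (c n) / q ^ Suc n) \<le> real (digmax q) / q ^ Suc n" for n
    using assms by (simp add: divide_right_mono)
qed

lemma val_sums:
  assumes "q > 1" "\<And>i. c i \<le> digmax q"
  shows "(\<lambda>i. real (c i) / q ^ Suc i) sums val q c"
  unfolding val_def using val_summable[OF assms] by (rule summable_sums)

lemma val_unique:
  assumes "(\<lambda>i. real (c i) / q ^ Suc i) sums y" shows "val q c = y"
  unfolding val_def using assms by (rule sums_unique[symmetric])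

lemma val_nonneg: assumes "q > 1" "\<And>i. c i \<le> digmax q" shows "0 \<le> val q c"
  unfolding val_def using val_summable[OF assms] assms(1) by (intro suminf_nonneg) auto

lemma val_le_MM: assumes "q > 1" "\<And>i. c i \<le> digmax q" shows "val q c \<le> MM q"
proof -
  have "val q c \<le> (\<Sum>i. real (digmax q) / q ^ Suc i)" unfolding val_def
    using val_summable[OF assms] sums_summable[OF const_sums[OF assms(1)]] assms
    by (intro suminf_le) (auto simp: divide_right_mono)
  then show ?thesis using sums_unique[OF const_sums[OF assms(1)]] by simp
qed

lemma val_split:
  assumes "q > 1" "\<And>i. c i \<le> digmax q"
  shows "val q c = (\<Sum>i<N. real (c i) / q ^ Suc i) + val q (\<lambda>i. c (N + i)) / q ^ N"
proof -
  have s: "summable (\<lambda>i. real (c i) / q ^ Suc i)" by (rule val_summable[OF assms])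
  have "val q c = (\<Sum>i. real (c (i + N)) / q ^ Suc (i + N)) + (\<Sum>i<N. real (c i) / q ^ Suc i)"
    unfolding val_def by (rule suminf_split_initial_segment[OF s])
  also have "(\<lambda>i. real (c (i + N)) / q ^ Suc (i + N)) = (\<lambda>i. (real (c (N + i)) / q ^ Suc i) / q ^ N)"
    by (auto simp: power_add add.commute)
  also have "(\<Sum>i. (real (c (N + i)) / q ^ Suc i) / q ^ N) = val q (\<lambda>i. c (N + i)) / q ^ N"
    unfolding val_def using val_summable[OF assms(1), of "\<lambda>i. c (N + i)"] assms(2)
    by (intro suminf_divide) auto
  finally show ?thesis by simp
qed

lemma val_Suc:
  assumes "q > 1" "\<And>i. c i \<le> digmax q"
  shows "val q c = (real (c 0) + val q (\<lambda>i. c (Suc i))) / q"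
  using val_split[OF assms, where N=1] assms(1) by (simp add: field_simps)

lemma val_conj:
  assumes "q > 1" "\<And>i. c i \<le> digmax q"
  shows "val q (\<lambda>i. digmax q - c i) = MM q - val q c"
proof -
  have "(\<lambda>i. real (digmax q) / q ^ Suc i - real (c i) / q ^ Suc i) sums (MM q - val q c)"
    by (intro sums_diff const_sums assms val_sums)
  moreover have "(\<lambda>i. real (digmax q) / q ^ Suc i - real (c i) / q ^ Suc i) = (\<lambda>i. real (digmax q - c i) / q ^ Suc i)"
    using assms(2) by (auto simp: of_nat_diff diff_divide_distrib)
  ultimately show ?thesis by (intro val_unique) simp
qed

lemma val_ds:
  assumes "q > 1" "0 < r" "r \<le> MM q"
  shows "val q (\<lambda>i. ds q r (n + i)) = orb q r n"
proof -
  have "(\<lambda>i. ds q r (n + i)) = ds q (orb q r n)" by (auto simp: ds_shift)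
  then show ?thesis using val_unique[OF ds_sums[OF assms(1)]] orb_bounds[OF assms] by auto
qed

lemma val_ds0:
  assumes "q > 1" "0 < r" "r \<le> MM q"
  shows "val q (ds q r) = r"
  using val_ds[OF assms, of 0] by simp

lemma lex_le_refl[simp]: "lex_le s s" unfolding lex_le_def by simp

lemma first_diff:
  fixes s t :: "nat \<Rightarrow> nat"
  assumes "s \<noteq> t" shows "\<exists>k. (\<forall>i<k. s i = t i) \<and> s k \<noteq> t k"
proof -
  obtain n where "s n \<noteq> t n" using assms by auto
  then have ex: "\<exists>n. s n \<noteq> t n" by auto
  define k where "k = (LEAST n. s n \<noteq> t n)"
  have "s k \<noteq> t k" unfolding k_def by (rule LeastI_ex[OF ex])
  moreover have "\<forall>i<k. s i = t i" unfolding k_def using not_less_Least by blast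
  ultimately show ?thesis by blast
qed

lemma not_lex_le:
  assumes "\<not> lex_le s t" shows "\<exists>k. (\<forall>i<k. s i = t i) \<and> t k < s k"
proof -
  have "s \<noteq> t" using assms unfolding lex_le_def by auto
  then obtain k where k: "\<forall>i<k. s i = t i" "s k \<noteq> t k" using first_diff by blast
  then have "\<not> s k < t k" using assms unfolding lex_le_def by blast
  then show ?thesis using k by (intro exI[of _ k]) auto
qed

lemma lex_strict:
  assumes "lex_le s t" "s \<noteq> t" shows "\<exists>k. (\<forall>i<k. s i = t i) \<and> s k < t k"
  using assms unfolding lex_le_def by auto

lemma lex_trans_strict:
  assumes "lex_le s t" "lex_le t u" "s \<noteq> t \<or> t \<noteq> u"
  shows "lex_le s u \<and> s \<noteq> u"
proof (cases "s = t")
  case True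
  then have "t \<noteq> u" using assms by auto
  then obtain k where "\<forall>i<k. t i = u i" "t k < u k" using lex_strict[OF assms(2)] by blast
  then show ?thesis using True unfolding lex_le_def by auto
next
  case st: False
  then obtain k1 where k1: "\<forall>i<k1. s i = t i" "s k1 < t k1" using lex_strict[OF assms(1)] by blast
  show ?thesis
  proof (cases "t = u")
    case True
    then show ?thesis using k1 unfolding lex_le_def by auto
  next
    case False
    then obtain k2 where k2: "\<forall>i<k2. t i = u i" "t k2 < u k2" using lex_strict[OF assms(2)] by blast
    define k where "k = min k1 k2"
    have eq: "\<forall>i<k. s i = u i" using k1 k2 unfolding k_def by auto
    have lt: "s k < u k"
    proof (cases "k1 < k2")
      case True then show ?thesis using k1 k2 unfolding k_def by auto
    next
      case False
      then show ?thesis using k1 k2 unfolding k_def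
        by (cases "k1 = k2") (auto simp: min_def)
    qed
    show ?thesis using eq lt unfolding lex_le_def by auto
  qed
qed

lemma lex_trans: "lex_le s t \<Longrightarrow> lex_le t u \<Longrightarrow> lex_le s u"
  using lex_trans_strict[of s t u] by (cases "s = t") auto



lemma val_pos:
  assumes "q > 1" "\<And>i. c i \<le> digmax q" "c j > 0"
  shows "val q c > 0"
  unfolding val_def using val_summable[OF assms(1,2)] assms(1,3)
  by (intro suminf_pos2[where i=j]) auto

lemma ds_mono:
  assumes q: "q > 1" and r: "0 < r" "r \<le> r'" "r' \<le> MM q"
  shows "lex_le (ds q r) (ds q r')"
proof (cases "ds q r = ds q r'")
  case True then show ?thesis by simp
next
  case False
  then obtain k where k: "\<forall>i<k. ds q r i = ds q r' i" "ds q r k \<noteq> ds q r' k"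
    using first_diff by blast
  have rM: "r \<le> MM q" using r by simp
  have "j \<le> k \<Longrightarrow> orb q r j \<le> orb q r' j" for j
  proof (induction j)
    case 0 then show ?case using r by simp
  next
    case (Suc j)
    then have "ds q r j = ds q r' j" using k by simp
    then show ?case using Suc q by (simp add: ds_def)
  qed
  then have "orb q r k \<le> orb q r' k" by simp
  then have "ds q r k \<le> ds q r' k" unfolding ds_def
    using dig_mono[OF q] orb_bounds[OF q r(1) rM, of k] by simp
  then have "ds q r k < ds q r' k" using k by simp
  then show ?thesis using k unfolding lex_le_def by blast
qed

lemma qg_tail_le_alpha:
  assumes q: "q > 1" and x: "0 < x" "x \<le> MM q" and d: "ds q x n < digmax q"
  shows "lex_le (\<lambda>i. ds q x (Suc n + i)) (ds q 1)"
proof -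
  have "(\<lambda>i. ds q x (Suc n + i)) = ds q (orb q x (Suc n))" by (rule ext, rule ds_shift[symmetric])
  moreover have "lex_le (ds q (orb q x (Suc n))) (ds q 1)"
    using ds_mono[OF q] orb_bounds[OF q x, of "Suc n"] orb_le1[OF q x d] MM_ge1[OF q] by simp
  ultimately show ?thesis by simp
qed

lemma largest_exp:
  assumes q: "q > 1" and y: "0 < y" "y \<le> MM q" and c: "\<And>i. c i \<le> digmax q"
    and s: "(\<lambda>i. real (c i) / q ^ Suc i) sums y"
    and inf: "\<And>N. \<exists>i\<ge>N. c i > 0"
  shows "lex_le c (ds q y)"
proof (rule ccontr)
  assume "\<not> ?thesis"
  then obtain k where k: "\<forall>i<k. c i = ds q y i" "ds q y k < c k" using not_lex_le by blast
  have dle: "\<And>i. ds q y i \<le> digmax q" using ds_le[OF q y] .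
  have vc: "val q c = y" using val_unique[OF s] .
  have vd: "val q (ds q y) = y" using val_ds0[OF q y] .
  have pre: "(\<Sum>i<k. real (c i) / q ^ Suc i) = (\<Sum>i<k. real (ds q y i) / q ^ Suc i)"
    using k by (intro sum.cong) auto
  have "val q (\<lambda>i. c (k + i)) / q ^ k = val q (\<lambda>i. ds q y (k + i)) / q ^ k"
    using val_split[of q c k, OF q c] val_split[of q "ds q y" k, OF q dle] vc vd pre by linarith
  then have "val q (\<lambda>i. c (k + i)) = val q (\<lambda>i. ds q y (k + i))"
    using q by (simp add: divide_cancel_right)
  then have "val q (\<lambda>i. c (k + i)) = orb q y k"
    using val_ds[OF q y, of k] by simp
  moreover have "val q (\<lambda>i. c (k + i)) = (real (c k) + val q (\<lambda>i. c (k + Suc i))) / q"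
    using val_Suc[OF q, of "\<lambda>i. c (k + i)"] c by simp
  moreover obtain j where j: "j \<ge> Suc k" "c j > 0" using inf by blast
  then have "val q (\<lambda>i. c (k + Suc i)) > 0"
    using val_pos[OF q, of "\<lambda>i. c (k + Suc i)" "j - Suc k"] c by simp
  ultimately have "real (c k) < q * orb q y k" using q by (simp add: field_simps)
  then have "c k \<le> ds q y k" unfolding ds_def
    using dig_props(3)[OF q _ c[of k]] orb_bounds[OF q y, of k] by simp
  then show False using k by simp
qed

lemma alpha_strict:
  assumes q: "q > 1" and qr: "q < r" and m: "digmax r = digmax q"
  shows "lex_le (ds q 1) (ds r 1) \<and> ds q 1 \<noteq> ds r 1"
proof -
  have r: "r > 1" using q qr by simp
  let ?A = "ds q 1"
  have q1: "0 < (1::real)" "1 \<le> MM q" using MM_ge1[OF q] by auto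
  have r1: "1 \<le> MM r" using MM_ge1[OF r] .
  have Aq: "\<And>i. ?A i \<le> digmax q" using ds_le[OF q q1] .
  have Ar: "\<And>i. ?A i \<le> digmax r" using Aq m by simp
  have A0: "?A 0 = digmax q" using dig_one[OF q] by (simp add: ds_def)
  have A0p: "?A 0 > 0" using A0 digmax_props(3)[OF q] by simp
  define y where "y = val r ?A"
  have ypos: "y > 0" unfolding y_def using val_pos[where c="ds q 1", OF r Ar A0p] .
  have "val q ?A - val r ?A > 0"
  proof -
    define f where "f = (\<lambda>i. real (?A i) / q ^ Suc i - real (?A i) / r ^ Suc i)"
    have fs: "f sums (val q ?A - val r ?A)" unfolding f_def
      using val_sums[where c="ds q 1", OF q Aq] val_sums[where c="ds q 1", OF r Ar] by (intro sums_diff)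
    have nn: "0 \<le> f n" for n
    proof -
      have qp: "0 < q ^ Suc n" using q by simp
      have "q ^ Suc n \<le> r ^ Suc n" using q qr by (intro power_mono) auto
      then have "real (?A n) / r ^ Suc n \<le> real (?A n) / q ^ Suc n"
        using qp by (intro divide_left_mono) auto
      then show ?thesis unfolding f_def by simp
    qed
    have p0: "0 < f 0" unfolding f_def using q qr A0p by (simp add: frac_less2)
    have "0 < suminf f" using suminf_pos2[OF sums_summable[OF fs] nn p0] .
    then show ?thesis using sums_unique[OF fs] by simp
  qed
  then have y1: "y < 1" unfolding y_def using val_ds0[OF q q1] by simp
  have inf: "\<exists>i\<ge>N. ?A i > 0" for N
  proof (rule ccontr)
    assume "\<not> ?thesis"
    then have "\<forall>i. ?A (N + i) = 0" by auto
    then have "val q (\<lambda>i. ?A (N + i)) = 0" by (simp add: val_def)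
    then show False using val_ds[OF q q1, of N] orb_bounds[OF q q1, of N] by simp
  qed
  have "lex_le ?A (ds r y)"
    using largest_exp[where c="ds q 1", OF r ypos _ Ar _ inf] y1 r1 val_sums[where c="ds q 1", OF r Ar] unfolding y_def by simp
  moreover have "lex_le (ds r y) (ds r 1)" using ds_mono[OF r ypos] y1 r1 by simp
  ultimately have le: "lex_le ?A (ds r 1)" by (rule lex_trans)
  have "?A \<noteq> ds r 1"
  proof
    assume "?A = ds r 1"
    then have "y = 1" unfolding y_def using val_ds0[OF r _ r1] by simp
    then show False using y1 by simp
  qed
  then show ?thesis using le by simp
qed

definition goodseq :: "real \<Rightarrow> (nat \<Rightarrow> nat) \<Rightarrow> bool" where
  "goodseq q b \<longleftrightarrow> (\<forall>i. b i \<le> digmax q) \<and>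
     (\<forall>j. b j < digmax q \<longrightarrow> lex_le (\<lambda>i. b (Suc j + i)) (ds q 1)) \<and> lex_le b (ds q 1)"

lemma goodseq_shift:
  assumes "goodseq q b" "b k < digmax q"
  shows "goodseq q (\<lambda>i. b (Suc k + i))"
  using assms unfolding goodseq_def by (auto simp: add.assoc)

lemma prefix_bound:
  assumes q: "q > 1" and b: "\<And>i. b i \<le> digmax q"
    and k: "\<forall>i<k. b i = ds q 1 i" "b k < ds q 1 k"
  shows "val q b < 1 - 1 / q ^ Suc k + val q (\<lambda>i. b (Suc k + i)) / q ^ Suc k"
proof -
  have q1: "0 < (1::real)" "1 \<le> MM q" using MM_ge1[OF q] by auto
  have "(\<Sum>i<Suc k. real (b i) / q ^ Suc i) = (\<Sum>i<k. real (ds q 1 i) / q ^ Suc i) + real (b k) / q ^ Suc k"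
    using k by simp
  also have "\<dots> \<le> (\<Sum>i<k. real (ds q 1 i) / q ^ Suc i) + (real (ds q 1 k) - 1) / q ^ Suc k"
    using k q by (intro add_left_mono divide_right_mono) auto
  also have "\<dots> = (\<Sum>i<Suc k. real (ds q 1 i) / q ^ Suc i) - 1 / q ^ Suc k"
    by (simp add: diff_divide_distrib)
  also have "\<dots> = 1 - orb q 1 (Suc k) / q ^ Suc k - 1 / q ^ Suc k"
    using ds_partial[OF q, of 1 "Suc k"] by simp
  also have "\<dots> < 1 - 1 / q ^ Suc k"
    using orb_bounds[OF q q1, of "Suc k"] q by simp
  finally have "(\<Sum>i<Suc k. real (b i) / q ^ Suc i) < 1 - 1 / q ^ Suc k" .
  then show ?thesis using val_split[of q b "Suc k", OF q b] by simp
qed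

lemma parry_aux:
  assumes q: "q > 1"
  shows "goodseq q b \<Longrightarrow> val q b \<le> 1 + MM q / q ^ N"
proof (induction N arbitrary: b)
  case 0
  then show ?case using val_le_MM[OF q, of b] unfolding goodseq_def by simp
next
  case (Suc N)
  have q1: "0 < (1::real)" "1 \<le> MM q" using MM_ge1[OF q] by auto
  have b: "\<And>i. b i \<le> digmax q" using Suc.prems unfolding goodseq_def by auto
  show ?case
  proof (cases "b = ds q 1")
    case True
    then have "val q b = 1" using val_ds0[OF q q1] by simp
    then show ?thesis using q q1 by simp
  next
    case False
    then obtain k where k: "\<forall>i<k. b i = ds q 1 i" "b k < ds q 1 k"
      using lex_strict Suc.prems unfolding goodseq_def by blast
    have bk: "b k < digmax q" using k ds_le[OF q q1, of k] by simp
    have IH: "val q (\<lambda>i. b (Suc k + i)) \<le> 1 + MM q / q ^ N"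
      using Suc.IH goodseq_shift[OF Suc.prems bk] by blast
    have "val q b < 1 - 1 / q ^ Suc k + val q (\<lambda>i. b (Suc k + i)) / q ^ Suc k"
      by (rule prefix_bound[OF q b k])
    also have "\<dots> \<le> 1 - 1 / q ^ Suc k + (1 + MM q / q ^ N) / q ^ Suc k"
      using IH q by (simp add: divide_right_mono)
    also have "\<dots> = 1 + MM q / (q ^ N * q ^ Suc k)" using q by (simp add: field_simps)
    also have "\<dots> \<le> 1 + MM q / q ^ Suc N"
    proof -
      have "q ^ Suc N \<le> q ^ N * q ^ Suc k"
        using q by (simp add: power_increasing mult_left_mono)
      then show ?thesis using q q1 by (simp add: frac_le)
    qed
    finally show ?thesis by simp
  qed
qed

lemma parry_le:
  assumes q: "q > 1" and g: "goodseq q b"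
  shows "val q b \<le> 1"
proof (rule ccontr)
  assume "\<not> ?thesis"
  then have pos: "(val q b - 1) / MM q > 0" using MM_ge1[OF q] by simp
  obtain N where N: "(1/q) ^ N < (val q b - 1) / MM q"
    using real_arch_pow_inv[OF pos, of "1/q"] q by auto
  have "MM q / q ^ N = MM q * (1/q) ^ N" by (simp add: power_divide)
  also have "\<dots> < val q b - 1" using N MM_ge1[OF q] by (simp add: field_simps)
  finally show False using parry_aux[OF q g, of N] by simp
qed

lemma parry_lt:
  assumes q: "q > 1" and g: "goodseq q b" and ne: "b \<noteq> ds q 1"
  shows "val q b < 1"
proof -
  have q1: "0 < (1::real)" "1 \<le> MM q" using MM_ge1[OF q] by auto
  have b: "\<And>i. b i \<le> digmax q" using g unfolding goodseq_def by auto
  obtain k where k: "\<forall>i<k. b i = ds q 1 i" "b k < ds q 1 k"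
    using lex_strict g ne unfolding goodseq_def by blast
  have bk: "b k < digmax q" using k ds_le[OF q q1, of k] by simp
  have "val q (\<lambda>i. b (Suc k + i)) \<le> 1" using parry_le[OF q goodseq_shift[OF g bk]] .
  then have "val q (\<lambda>i. b (Suc k + i)) / q ^ Suc k \<le> 1 / q ^ Suc k"
    using q by (simp add: divide_right_mono)
  then show ?thesis using prefix_bound[OF q b k] by simp
qed



lemma unique_suff:
  assumes q: "q > 1" and c: "\<And>i. c i \<le> digmax q"
    and s: "(\<lambda>i. real (c i) / q ^ Suc i) sums y"
    and A: "\<And>n. c n < digmax q \<Longrightarrow> val q (\<lambda>i. c (Suc n + i)) < 1"
    and B: "\<And>n. 0 < c n \<Longrightarrow> MM q - 1 < val q (\<lambda>i. c (Suc n + i))"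
    and d: "is_expansion y q d"
  shows "d = c"
proof (rule ccontr)
  assume "d \<noteq> c"
  then obtain n where n: "\<forall>i<n. c i = d i" "c n \<noteq> d n" using first_diff[of c d] by auto
  have dm: "\<And>i. d i \<le> digmax q" and ds: "(\<lambda>i. real (d i) / q ^ Suc i) sums y"
    using d unfolding is_expansion_def by auto
  have vc: "val q c = y" using val_unique[OF s] .
  have vd: "val q d = y" using val_unique[OF ds] .
  have pre: "(\<Sum>i<n. real (c i) / q ^ Suc i) = (\<Sum>i<n. real (d i) / q ^ Suc i)"
    using n by (intro sum.cong) auto
  have "val q (\<lambda>i. c (n + i)) / q ^ n = val q (\<lambda>i. d (n + i)) / q ^ n"
    using val_split[of q c n, OF q c] val_split[of q d n, OF q dm] vc vd pre by linarith
  then have eq: "val q (\<lambda>i. c (n + i)) = val q (\<lambda>i. d (n + i))"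
    using q by (simp add: divide_cancel_right)
  have "val q (\<lambda>i. c (n + i)) = (real (c n) + val q (\<lambda>i. c (Suc n + i))) / q"
    using val_Suc[of q "\<lambda>i. c (n + i)", OF q] c by simp
  moreover have "val q (\<lambda>i. d (n + i)) = (real (d n) + val q (\<lambda>i. d (Suc n + i))) / q"
    using val_Suc[of q "\<lambda>i. d (n + i)", OF q] dm by simp
  ultimately have E: "real (c n) + val q (\<lambda>i. c (Suc n + i)) = real (d n) + val q (\<lambda>i. d (Suc n + i))"
    using eq q by (simp add: divide_cancel_right)
  have Td: "0 \<le> val q (\<lambda>i. d (Suc n + i))" "val q (\<lambda>i. d (Suc n + i)) \<le> MM q"
    using val_nonneg[of q "\<lambda>i. d (Suc n + i)", OF q] val_le_MM[of q "\<lambda>i. d (Suc n + i)", OF q] dm by auto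
  show False
  proof (cases "c n < d n")
    case True
    then have "c n < digmax q" using dm[of n] by simp
    then have "val q (\<lambda>i. c (Suc n + i)) < 1" by (rule A)
    moreover have "real (c n) + 1 \<le> real (d n)" using True by simp
    ultimately show False using E Td by linarith
  next
    case False
    then have "d n < c n" using n by simp
    then have "0 < c n" by simp
    then have "MM q - 1 < val q (\<lambda>i. c (Suc n + i))" by (rule B)
    moreover have "real (d n) + 1 \<le> real (c n)" using \<open>d n < c n\<close> by simp
    ultimately show False using E Td by linarith
  qed
qed

lemma exp_exists:
  assumes q: "q > 1" and y: "0 \<le> y" "y \<le> MM q"
  shows "\<exists>E. (\<forall>i. E i \<le> digmax q) \<and> (\<lambda>i. real (E i) / q ^ Suc i) sums y"
proof (cases "y = 0")
  case True
  then show ?thesis by (intro exI[of _ "\<lambda>_. 0"]) auto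
next
  case False
  then have "0 < y" using y by simp
  then show ?thesis using ds_le[OF q _ y(2)] ds_sums[OF q _ y(2)] by blast
qed

lemma splice_sums:
  assumes "(\<lambda>i. real (E i) / q ^ Suc i) sums v" "\<And>i. e (N + i) = E i" "q \<noteq> 0"
  shows "(\<lambda>i. real (e i) / q ^ Suc i) sums ((\<Sum>i<N. real (e i) / q ^ Suc i) + v / q ^ N)"
proof -
  have "(\<lambda>i. (real (E i) / q ^ Suc i) / q ^ N) sums (v / q ^ N)"
    using assms(1) by (rule sums_divide)
  moreover have "(\<lambda>i. (real (E i) / q ^ Suc i) / q ^ N) = (\<lambda>i. real (e (i + N)) / q ^ Suc (i + N))"
    using assms(2,3) by (auto simp: power_add add.commute)
  ultimately have "(\<lambda>i. real (e (i + N)) / q ^ Suc (i + N)) sums (v / q ^ N)" by simp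
  then show ?thesis using sums_iff_shift[of "\<lambda>i. real (e i) / q ^ Suc i" N] by (simp add: add.commute)
qed

lemma setU_unique:
  assumes "(x, q) \<in> setU" "is_expansion x q c" "is_expansion x q d"
  shows "c = d"
  using assms unfolding setU_def by auto

lemma ds_expansion:
  assumes q: "q > 1" and x: "0 < x" "x \<le> MM q"
  shows "is_expansion x q (ds q x)"
  unfolding is_expansion_def using ds_le[OF q x] ds_sums[OF q x] by auto

lemma unique_nec:
  assumes U: "(x, q) \<in> setU" and x: "x > 0"
  shows "ds q x n < digmax q \<Longrightarrow> orb q x (Suc n) < 1"
    and "0 < ds q x n \<Longrightarrow> MM q - 1 < orb q x (Suc n)"
proof -
  have J: "(x, q) \<in> setJ" using U unfolding setU_def by auto
  then have q: "q > 1" and xM: "x \<le> MM q" using setJ_iff by auto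
  note xx = x xM
  let ?D = "ds q x"
  let ?o = "orb q x (Suc n)"
  have oB: "0 < ?o" "?o \<le> MM q" using orb_bounds[OF q xx, of "Suc n"] by blast+
  have Dexp: "is_expansion x q ?D" by (rule ds_expansion[OF q xx])
  have Dle: "\<And>i. ?D i \<le> digmax q" using ds_le[OF q xx] .
  have psum: "(\<Sum>i<Suc n. real (?D i) / q ^ Suc i) = x - ?o / q ^ Suc n"
    using ds_partial[OF q] .
  show "?D n < digmax q \<Longrightarrow> ?o < 1"
  proof (rule ccontr)
    assume lt: "?D n < digmax q" and "\<not> ?o < 1"
    then have o1: "1 \<le> ?o" by simp
    obtain E where E: "\<forall>i. E i \<le> digmax q" "(\<lambda>i. real (E i) / q ^ Suc i) sums (?o - 1)"
      using exp_exists[OF q, of "?o - 1"] o1 oB by auto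
    define e where "e = (\<lambda>i. if i < n then ?D i else if i = n then ?D n + 1 else E (i - Suc n))"
    have eS: "\<And>i. e (Suc n + i) = E i" unfolding e_def by simp
    have pe: "(\<Sum>i<Suc n. real (e i) / q ^ Suc i) = (\<Sum>i<Suc n. real (?D i) / q ^ Suc i) + 1 / q ^ Suc n"
    proof -
      have "(\<Sum>i<n. real (e i) / q ^ Suc i) = (\<Sum>i<n. real (?D i) / q ^ Suc i)"
        unfolding e_def by (intro sum.cong) auto
      then show ?thesis unfolding e_def by (simp add: add_divide_distrib)
    qed
    have "(\<lambda>i. real (e i) / q ^ Suc i) sums ((\<Sum>i<Suc n. real (e i) / q ^ Suc i) + (?o - 1) / q ^ Suc n)"
      using splice_sums[OF E(2) eS] q by simp
    moreover have "(\<Sum>i<Suc n. real (e i) / q ^ Suc i) + (?o - 1) / q ^ Suc n = x"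
      unfolding pe psum by (simp add: diff_divide_distrib)
    ultimately have es: "(\<lambda>i. real (e i) / q ^ Suc i) sums x" by simp
    have "\<forall>i. e i \<le> digmax q" unfolding e_def using Dle E(1) lt by auto
    then have "is_expansion x q e" using es unfolding is_expansion_def by auto
    then have "e = ?D" using setU_unique[OF U _ Dexp] by blast
    then have "e n = ?D n" by simp
    then show False unfolding e_def by simp
  qed
  show "0 < ?D n \<Longrightarrow> MM q - 1 < ?o"
  proof (rule ccontr)
    assume gt: "0 < ?D n" and "\<not> MM q - 1 < ?o"
    then have o1: "?o + 1 \<le> MM q" by simp
    obtain E where E: "\<forall>i. E i \<le> digmax q" "(\<lambda>i. real (E i) / q ^ Suc i) sums (?o + 1)"
      using exp_exists[OF q, of "?o + 1"] o1 oB by auto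
    define e where "e = (\<lambda>i. if i < n then ?D i else if i = n then ?D n - 1 else E (i - Suc n))"
    have eS: "\<And>i. e (Suc n + i) = E i" unfolding e_def by simp
    have pe: "(\<Sum>i<Suc n. real (e i) / q ^ Suc i) = (\<Sum>i<Suc n. real (?D i) / q ^ Suc i) - 1 / q ^ Suc n"
    proof -
      have "(\<Sum>i<n. real (e i) / q ^ Suc i) = (\<Sum>i<n. real (?D i) / q ^ Suc i)"
        unfolding e_def by (intro sum.cong) auto
      moreover have "real (?D n - 1) = real (?D n) - 1" using gt by (simp add: of_nat_diff)
      ultimately show ?thesis unfolding e_def by (simp add: diff_divide_distrib)
    qed
    have "(\<lambda>i. real (e i) / q ^ Suc i) sums ((\<Sum>i<Suc n. real (e i) / q ^ Suc i) + (?o + 1) / q ^ Suc n)"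
      using splice_sums[OF E(2) eS] q by simp
    moreover have "(\<Sum>i<Suc n. real (e i) / q ^ Suc i) + (?o + 1) / q ^ Suc n = x"
      unfolding pe psum by (simp add: add_divide_distrib)
    ultimately have es: "(\<lambda>i. real (e i) / q ^ Suc i) sums x" by simp
    have "\<forall>i. e i \<le> digmax q" unfolding e_def using Dle E(1) by (auto simp: le_diff_conv intro: le_SucI)
    then have "is_expansion x q e" using es unfolding is_expansion_def by auto
    then have "e = ?D" using setU_unique[OF U _ Dexp] by blast
    then have "e n = ?D n" by simp
    then show False unfolding e_def using gt by simp
  qed
qed



lemma point_in_U:
  assumes q: "q > 1" and qr: "q < r" and m: "digmax r = digmax q"
    and x: "0 < x" "x \<le> MM q"
    and C: "\<And>n. 0 < ds q x n \<Longrightarrow> lex_le (\<lambda>i. digmax q - ds q x (Suc n + i)) (ds q 1)"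
  shows "(val r (ds q x), r) \<in> setU"
proof -
  have r: "r > 1" using q qr by simp
  let ?c = "ds q x"
  let ?m = "digmax q"
  have cq: "\<And>i. ?c i \<le> ?m" using ds_le[OF q x] .
  have cr: "\<And>i. ?c i \<le> digmax r" using cq m by simp
  obtain al: "lex_le (ds q 1) (ds r 1)" and ne: "ds q 1 \<noteq> ds r 1"
    using alpha_strict[OF q qr m] by blast
  have lt_r: "lex_le b (ds r 1) \<and> b \<noteq> ds r 1" if "lex_le b (ds q 1)" for b
    using lex_trans_strict[OF that al] ne by blast
  have A: "val r (\<lambda>i. ?c (Suc n + i)) < 1" if cn: "?c n < digmax r" for n
  proof -
    let ?b = "\<lambda>i. ?c (Suc n + i)"
    have g: "goodseq r ?b" unfolding goodseq_def
    proof (intro conjI allI impI)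
      show "?b i \<le> digmax r" for i using cr by simp
      fix j assume "?b j < digmax r"
      then have "?c (Suc n + j) < ?m" using m by simp
      then have "lex_le (\<lambda>i. ?c (Suc (Suc n + j) + i)) (ds q 1)" by (rule qg_tail_le_alpha[OF q x])
      then have "lex_le (\<lambda>i. ?c (Suc (Suc n + j) + i)) (ds r 1)" using lt_r by blast
      moreover have "(\<lambda>i. ?b (Suc j + i)) = (\<lambda>i. ?c (Suc (Suc n + j) + i))" by (simp add: add_ac)
      ultimately show "lex_le (\<lambda>i. ?b (Suc j + i)) (ds r 1)" by simp
    next
      have "lex_le ?b (ds q 1)" using qg_tail_le_alpha[OF q x] cn m by simp
      then show "lex_le ?b (ds r 1)" using lt_r by blast
    qed
    have "lex_le ?b (ds q 1)" using qg_tail_le_alpha[OF q x] cn m by simp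
    then have "?b \<noteq> ds r 1" using lt_r by blast
    then show ?thesis using parry_lt[OF r g] by simp
  qed
  have B: "MM r - 1 < val r (\<lambda>i. ?c (Suc n + i))" if cn: "0 < ?c n" for n
  proof -
    let ?b = "\<lambda>i. ?m - ?c (Suc n + i)"
    have g: "goodseq r ?b" unfolding goodseq_def
    proof (intro conjI allI impI)
      show "?b i \<le> digmax r" for i using m by simp
      fix j assume "?b j < digmax r"
      then have "0 < ?c (Suc n + j)" using m by simp
      then have "lex_le (\<lambda>i. ?m - ?c (Suc (Suc n + j) + i)) (ds q 1)" by (rule C)
      then have "lex_le (\<lambda>i. ?m - ?c (Suc (Suc n + j) + i)) (ds r 1)" using lt_r by blast
      moreover have "(\<lambda>i. ?b (Suc j + i)) = (\<lambda>i. ?m - ?c (Suc (Suc n + j) + i))" by (simp add: add_ac)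
      ultimately show "lex_le (\<lambda>i. ?b (Suc j + i)) (ds r 1)" by simp
    next
      show "lex_le ?b (ds r 1)" using C[OF cn] lt_r by blast
    qed
    have "?b \<noteq> ds r 1" using C[OF cn] lt_r by blast
    then have "val r ?b < 1" using parry_lt[OF r g] by simp
    moreover have "val r ?b = MM r - val r (\<lambda>i. ?c (Suc n + i))"
      using val_conj[of r "\<lambda>i. ?c (Suc n + i)", OF r] cr m by simp
    ultimately show ?thesis by simp
  qed
  have s: "(\<lambda>i. real (?c i) / r ^ Suc i) sums val r ?c" using val_sums[of r ?c, OF r cr] .
  have uniq: "\<And>d. is_expansion (val r ?c) r d \<Longrightarrow> d = ?c"
    by (rule unique_suff[OF r cr s A B]) auto
  have ex: "is_expansion (val r ?c) r ?c" unfolding is_expansion_def using cr s by auto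
  have "(val r ?c, r) \<in> setJ" unfolding setJ_iff
    using r val_nonneg[of r ?c, OF r cr] val_le_MM[of r ?c, OF r cr] by simp
  then show ?thesis unfolding setU_def using ex uniq by auto
qed

lemma val_diff_bound:
  assumes q: "q > 1" and qr: "q < r" and m: "digmax r = digmax q" and c: "\<And>i. c i \<le> digmax q"
  shows "val r c \<le> val q c" "val q c - val r c \<le> MM q - MM r"
proof -
  have r: "r > 1" using q qr by simp
  have cr: "\<And>i. c i \<le> digmax r" using c m by simp
  have pw: "real (c i) / r ^ Suc i \<le> real (c i) / q ^ Suc i" for i
  proof -
    have "q ^ Suc i \<le> r ^ Suc i" using q qr by (intro power_mono) auto
    moreover have "0 < r ^ Suc i * q ^ Suc i" using q r by simp
    ultimately show ?thesis by (intro divide_left_mono) auto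
  qed
  show "val r c \<le> val q c"
    by (rule sums_le[OF pw val_sums[of r c, OF r cr] val_sums[of q c, OF q c]])
  have s1: "(\<lambda>i. real (c i) / q ^ Suc i - real (c i) / r ^ Suc i) sums (val q c - val r c)"
    using val_sums[of q c, OF q c] val_sums[of r c, OF r cr] by (rule sums_diff)
  have s2: "(\<lambda>i. real (digmax q) / q ^ Suc i - real (digmax q) / r ^ Suc i) sums (MM q - MM r)"
    using const_sums[OF q] const_sums[OF r] m by (intro sums_diff) auto
  have pw2: "real (c i) / q ^ Suc i - real (c i) / r ^ Suc i \<le> real (digmax q) / q ^ Suc i - real (digmax q) / r ^ Suc i" for i
  proof -
    have "real (c i) / q ^ Suc i - real (c i) / r ^ Suc i = real (c i) * (1 / q ^ Suc i - 1 / r ^ Suc i)"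
      by (simp add: field_simps)
    also have "\<dots> \<le> real (digmax q) * (1 / q ^ Suc i - 1 / r ^ Suc i)"
    proof (rule mult_right_mono)
      show "real (c i) \<le> real (digmax q)" using c by simp
      have "q ^ Suc i \<le> r ^ Suc i" using q qr by (intro power_mono) auto
      then show "0 \<le> 1 / q ^ Suc i - 1 / r ^ Suc i" using q by (simp add: frac_le)
    qed
    also have "\<dots> = real (digmax q) / q ^ Suc i - real (digmax q) / r ^ Suc i" by (simp add: field_simps)
    finally show ?thesis .
  qed
  show "val q c - val r c \<le> MM q - MM r" by (rule sums_le[OF pw2 s1 s2])
qed

lemma closure_nonint:
  assumes J: "(x, q) \<in> setJ" and x: "x > 0" and ni: "of_int \<lceil>q\<rceil> \<noteq> q"
    and C: "\<And>n. 0 < ds q x n \<Longrightarrow> lex_le (\<lambda>i. digmax q - ds q x (Suc n + i)) (ds q 1)"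
  shows "(x, q) \<in> closure setU"
proof -
  have q: "q > 1" and xM: "x \<le> MM q" using J setJ_iff by auto
  have cq: "q < of_int \<lceil>q\<rceil>" using ni le_of_int_ceiling[of q] by linarith
  define \<delta> where "\<delta> = of_int \<lceil>q\<rceil> - q"
  have dpos: "\<delta> > 0" unfolding \<delta>_def using cq by simp
  define r where "r = (\<lambda>k::nat. q + \<delta> / real (k + 2))"
  have rq: "q < r k" for k unfolding r_def using dpos by simp
  have rc: "r k < of_int \<lceil>q\<rceil>" for k
  proof -
    have "\<delta> / real (k + 2) < \<delta>" using dpos by (simp add: divide_less_eq)
    then show ?thesis unfolding r_def \<delta>_def by simp
  qed
  have rm: "digmax (r k) = digmax q" for k
  proof -
    have "of_int \<lceil>q\<rceil> - 1 < r k" using rq[of k] ceiling_correct[of q] by linarith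
    then have "\<lceil>r k\<rceil> = \<lceil>q\<rceil>" using rc[of k] by (intro ceiling_unique) auto
    then show ?thesis unfolding digmax_def by simp
  qed
  have r1: "r k > 1" for k using rq[of k] q by simp
  let ?c = "ds q x"
  have cq': "\<And>i. ?c i \<le> digmax q" using ds_le[OF q x xM] .
  have inU: "(val (r k) ?c, r k) \<in> setU" for k
    by (rule point_in_U[OF q rq rm x xM C])
  have rlim: "r \<longlonglongrightarrow> q"
  proof -
    have "(\<lambda>n. \<delta> / real n) \<longlonglongrightarrow> 0" by (rule lim_const_over_n)
    then have "(\<lambda>n. \<delta> / real (n + 2)) \<longlonglongrightarrow> 0" using LIMSEQ_ignore_initial_segment by fastforce
    then have "(\<lambda>n. q + \<delta> / real (n + 2)) \<longlonglongrightarrow> q + 0" by (intro tendsto_add tendsto_const)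
    then show ?thesis unfolding r_def by simp
  qed
  have MMlim: "(\<lambda>k. MM (r k)) \<longlonglongrightarrow> MM q"
  proof -
    have "(\<lambda>k. real (digmax q) / (r k - 1)) \<longlonglongrightarrow> real (digmax q) / (q - 1)"
      using q by (intro tendsto_divide tendsto_const tendsto_diff rlim) auto
    moreover have "(\<lambda>k. real (digmax q) / (r k - 1)) = (\<lambda>k. MM (r k))" unfolding MM_def using rm by simp
    ultimately show ?thesis unfolding MM_def by simp
  qed
  have xlim: "(\<lambda>k. val (r k) ?c) \<longlonglongrightarrow> x"
  proof (rule real_tendsto_sandwich)
    have "x - (MM q - MM (r k)) \<le> val (r k) ?c" for k
      using val_diff_bound(2)[of q "r k" ?c, OF q rq rm cq'] val_ds0[OF q x xM] by simp
    then show "\<forall>\<^sub>F k in sequentially. x - (MM q - MM (r k)) \<le> val (r k) ?c"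
      by (intro always_eventually) auto
    have "val (r k) ?c \<le> x" for k
      using val_diff_bound(1)[of q "r k" ?c, OF q rq rm cq'] val_ds0[OF q x xM] by simp
    then show "\<forall>\<^sub>F k in sequentially. val (r k) ?c \<le> x"
      by (intro always_eventually) auto
    have "(\<lambda>k. x - (MM q - MM (r k))) \<longlonglongrightarrow> x - (MM q - MM q)"
      by (intro tendsto_diff tendsto_const MMlim)
    then show "(\<lambda>k. x - (MM q - MM (r k))) \<longlonglongrightarrow> x" by simp
    show "(\<lambda>k. x) \<longlonglongrightarrow> x" by simp
  qed
  have "(\<lambda>k. (val (r k) ?c, r k)) \<longlonglongrightarrow> (x, q)" by (intro tendsto_Pair xlim rlim)
  then show ?thesis unfolding closure_sequential using inU
    by (intro exI[of _ "\<lambda>k. (val (r k) ?c, r k)"]) auto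
qed

lemma exists_irrational:
  fixes a b :: real assumes "a < b" shows "\<exists>y. a < y \<and> y < b \<and> y \<notin> \<rat>"
proof (rule ccontr)
  assume "\<not> ?thesis"
  then have "{a<..<b} \<subseteq> \<rat>" by auto
  then have "countable {a<..<b}" using countable_rat countable_subset by blast
  then show False using uncountable_open_interval assms by blast
qed

lemma irr_unique:
  assumes q: "q > 1" and qi: "of_int \<lceil>q\<rceil> = q" and y: "0 < y" "y < 1" "y \<notin> \<rat>"
  shows "(y, q) \<in> setU"
proof -
  have M1: "MM q = 1" unfolding MM_def using digmax_real[OF q] qi q by simp
  have yM: "y \<le> MM q" using M1 y by simp
  have qZ: "q \<in> \<int>" using qi by (metis Ints_of_int)
  have oZ: "orb q y n - q ^ n * y \<in> \<int>" for n
  proof (induction n)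
    case 0 then show ?case by simp
  next
    case (Suc n)
    have "orb q y (Suc n) - q ^ Suc n * y = q * (orb q y n - q ^ n * y) - real (dig q (orb q y n))"
      by (simp add: algebra_simps)
    also have "\<dots> \<in> \<int>" using Ints_mult[OF qZ Suc.IH] by (intro Ints_diff Ints_of_nat)
    finally show ?case .
  qed
  have on1: "orb q y (Suc n) \<noteq> 1" for n
  proof
    assume o1: "orb q y (Suc n) = 1"
    then have "1 - q ^ Suc n * y \<in> \<int>" using oZ[of "Suc n"] by simp
    then have "1 - (1 - q ^ Suc n * y) \<in> \<int>" by (rule Ints_diff[OF Ints_1])
    then have "q ^ Suc n * y \<in> \<int>" by simp
    then have "q ^ Suc n * y \<in> \<rat>" using Ints_subset_Rats by blast
    moreover have qQ: "q \<in> \<rat>" using qZ Ints_subset_Rats by blast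
    have "q ^ Suc n \<in> \<rat>" using qQ by (rule Rats_power)
    moreover have "q ^ Suc n \<noteq> 0" using q by simp
    ultimately have "(q ^ Suc n * y) / q ^ Suc n \<in> \<rat>" by (intro Rats_divide)
    then show False using y \<open>q ^ Suc n \<noteq> 0\<close> by simp
  qed
  let ?c = "ds q y"
  have cq: "\<And>i. ?c i \<le> digmax q" using ds_le[OF q y(1) yM] .
  have s: "(\<lambda>i. real (?c i) / q ^ Suc i) sums y" using ds_sums[OF q y(1) yM] .
  have A: "val q (\<lambda>i. ?c (Suc n + i)) < 1" if "?c n < digmax q" for n
    using orb_le1[OF q y(1) yM that] on1[of n] val_ds[OF q y(1) yM, of "Suc n"] by simp
  have B: "MM q - 1 < val q (\<lambda>i. ?c (Suc n + i))" for n
    using orb_bounds[OF q y(1) yM, of "Suc n"] val_ds[OF q y(1) yM, of "Suc n"] M1 by simp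
  have uniq: "\<And>d. is_expansion y q d \<Longrightarrow> d = ?c"
    by (rule unique_suff[OF q cq s A B]) auto
  have ex: "is_expansion y q ?c" unfolding is_expansion_def using cq s by auto
  have "(y, q) \<in> setJ" unfolding setJ_iff using q y yM by simp
  then show ?thesis unfolding setU_def using ex uniq by auto
qed

lemma closure_int:
  assumes J: "(x, q) \<in> setJ" and qi: "of_int \<lceil>q\<rceil> = q"
  shows "(x, q) \<in> closure setU"
proof -
  have q: "q > 1" and x: "0 \<le> x" "x \<le> MM q" using J setJ_iff by auto
  have M1: "MM q = 1" unfolding MM_def using digmax_real[OF q] qi q by simp
  define e where "e = (\<lambda>k::nat. inverse (real (Suc k)))"
  have epos: "e k > 0" for k unfolding e_def by simp
  have "\<exists>y. max 0 (x - e k) < y \<and> y < min 1 (x + e k) \<and> y \<notin> \<rat>" for k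
    using epos[of k] x M1 by (intro exists_irrational) auto
  then obtain y where y: "\<And>k. max 0 (x - e k) < y k \<and> y k < min 1 (x + e k) \<and> y k \<notin> \<rat>"
    by metis
  have inU: "(y k, q) \<in> setU" for k
    using irr_unique[OF q qi] y[of k] by auto
  have ylim: "y \<longlonglongrightarrow> x"
  proof (rule real_tendsto_sandwich)
    show "\<forall>\<^sub>F k in sequentially. x + - e k \<le> y k" using y by (intro always_eventually) (auto simp: less_imp_le)
    show "\<forall>\<^sub>F k in sequentially. y k \<le> x + e k" using y by (intro always_eventually) (auto simp: less_imp_le)
    show "(\<lambda>k. x + - e k) \<longlonglongrightarrow> x" unfolding e_def by (rule LIMSEQ_inverse_real_of_nat_add_minus)
    show "(\<lambda>k. x + e k) \<longlonglongrightarrow> x" unfolding e_def by (rule LIMSEQ_inverse_real_of_nat_add)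
  qed
  have "(\<lambda>k. (y k, q)) \<longlonglongrightarrow> (x, q)" by (intro tendsto_Pair ylim tendsto_const)
  then show ?thesis unfolding closure_sequential using inU
    by (intro exI[of _ "\<lambda>k. (y k, q)"]) auto
qed



lemma V_imp_C:
  assumes q: "q > 1" and x: "0 < x" "x \<le> MM q"
    and V: "\<And>n. 0 < ds q x n \<Longrightarrow> MM q - 1 \<le> orb q x (Suc n)"
    and dn: "0 < ds q x n"
  shows "lex_le (\<lambda>i. digmax q - ds q x (Suc n + i)) (ds q 1)"
proof (rule ccontr)
  let ?m = "digmax q"
  define b where "b = (\<lambda>i. ?m - ds q x (Suc n + i))"
  let ?A = "ds q 1"
  have q1: "0 < (1::real)" "1 \<le> MM q" using MM_ge1[OF q] by auto
  assume "\<not> lex_le (\<lambda>i. digmax q - ds q x (Suc n + i)) (ds q 1)"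
  then obtain k where k: "\<forall>i<k. b i = ?A i" "?A k < b k" using not_lex_le unfolding b_def by blast
  have bl: "\<And>i. b i \<le> ?m" unfolding b_def by simp
  have dl: "\<And>i. ds q x i \<le> ?m" using ds_le[OF q x] .
  have vb: "val q b = MM q - orb q x (Suc n)"
    using val_conj[of q "\<lambda>i. ds q x (Suc n + i)", OF q] dl val_ds[OF q x, of "Suc n"] unfolding b_def by simp
  have vsplit: "val q b = (\<Sum>i<k. real (b i) / q ^ Suc i) + val q (\<lambda>i. b (k + i)) / q ^ k"
    using val_split[of q b k, OF q bl] .
  define \<tau> where "\<tau> = val q (\<lambda>i. b (Suc k + i))"
  have vS: "val q (\<lambda>i. b (k + i)) = (real (b k) + \<tau>) / q"
    using val_Suc[of q "\<lambda>i. b (k + i)", OF q] bl unfolding \<tau>_def by simp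
  have pre: "(\<Sum>i<k. real (b i) / q ^ Suc i) = 1 - orb q 1 k / q ^ k"
  proof -
    have "(\<Sum>i<k. real (b i) / q ^ Suc i) = (\<Sum>i<k. real (?A i) / q ^ Suc i)"
      using k by (intro sum.cong) auto
    then show ?thesis using ds_partial[OF q, of 1 k] by simp
  qed
  have Ak: "?A k < ?m" using k bl[of k] by simp
  have o1: "0 < orb q 1 k" using orb_bounds[OF q q1, of k] by simp
  have qo: "q * orb q 1 k \<le> real (?A k) + 1"
    using dig_lt_max[OF q o1] Ak unfolding ds_def by simp
  then have qob: "q * orb q 1 k \<le> real (b k)" using k by linarith
  have tau: "\<tau> = MM q - orb q x (Suc n + Suc k)"
  proof -
    have "\<tau> = val q (\<lambda>i. ?m - ds q x ((Suc n + Suc k) + i))"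
      unfolding \<tau>_def b_def by (simp add: add_ac)
    also have "\<dots> = MM q - val q (\<lambda>i. ds q x ((Suc n + Suc k) + i))"
      using val_conj[of q "\<lambda>i. ds q x ((Suc n + Suc k) + i)", OF q] dl by simp
    also have "\<dots> = MM q - orb q x (Suc n + Suc k)" by (simp only: val_ds[OF q x, of "Suc n + Suc k"])
    finally show ?thesis .
  qed
  have "ds q x (Suc n + k) < ?m" using k unfolding b_def by simp
  then have "orb q x (Suc (Suc n + k)) \<le> 1" by (rule orb_le1[OF q x])
  then have tauge: "MM q - 1 \<le> \<tau>" using tau by simp
  have qk: "0 < q ^ k" using q by simp
  have "val q b = 1 - orb q 1 k / q ^ k + (real (b k) + \<tau>) / (q * q ^ k)"
    using vsplit vS pre by simp
  also have "\<dots> \<ge> 1 - orb q 1 k / q ^ k + (q * orb q 1 k + \<tau>) / (q * q ^ k)"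
    using qob q qk by (simp add: divide_right_mono)
  finally have ge: "val q b \<ge> 1 - orb q 1 k / q ^ k + (q * orb q 1 k + \<tau>) / (q * q ^ k)" .
  have "(q * orb q 1 k + \<tau>) / (q * q ^ k) = orb q 1 k / q ^ k + \<tau> / (q * q ^ k)"
    using q qk by (simp add: field_simps)
  then have ge2: "val q b \<ge> 1 + \<tau> / (q * q ^ k)" using ge by simp
  have le1: "val q b \<le> 1" using vb V[OF dn] by simp
  have on: "0 < orb q x (Suc n)" using orb_bounds[OF q x] by blast
  show False
  proof (cases "MM q = 1")
    case True
    then have "\<tau> / (q * q ^ k) \<ge> 0" using tauge q qk by simp
    then show False using ge2 vb True on by simp
  next
    case False
    then have "MM q - 1 > 0" using q1 by simp
    then have "\<tau> / (q * q ^ k) > 0" using tauge q qk by simp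
    then show False using ge2 le1 by simp
  qed
qed

lemma MM_gt1_nonint:
  assumes q: "q > 1" and ni: "of_int \<lceil>q\<rceil> \<noteq> q"
  shows "MM q > 1"
proof -
  have "q < of_int \<lceil>q\<rceil>" using ni le_of_int_ceiling[of q] by linarith
  then have "q - 1 < real (digmax q)" using digmax_real[OF q] by simp
  then show ?thesis unfolding MM_def using q by simp
qed

lemma digit_stab:
  fixes qk ok :: "nat \<Rightarrow> real"
  assumes q: "q > 1" and ni: "of_int \<lceil>q\<rceil> \<noteq> q"
    and qk: "qk \<longlonglongrightarrow> q" and ok: "ok \<longlonglongrightarrow> ov" and ov: "ov > 0"
    and MMk: "(\<lambda>k. MM (qk k)) \<longlonglongrightarrow> MM q"
    and ev: "eventually (\<lambda>k. qk k > 1 \<and> digmax (qk k) = digmax q \<and> ok k > 0 \<and>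
        (dig (qk k) (ok k) > 0 \<longrightarrow> MM (qk k) - 1 < qk k * ok k - real (dig (qk k) (ok k)))) sequentially"
  shows "eventually (\<lambda>k. dig (qk k) (ok k) = dig q ov) sequentially"
proof -
  define D where "D = dig q ov"
  let ?m = "digmax q"
  have tk: "(\<lambda>k. qk k * ok k) \<longlonglongrightarrow> q * ov" by (intro tendsto_mult qk ok)
  have Dm: "D \<le> ?m" "real D < q * ov" unfolding D_def using dig_props[OF q ov] by auto
  have M1: "MM q > 1" by (rule MM_gt1_nonint[OF q ni])
  show ?thesis
  proof (cases "D = ?m")
    case True
    have e1: "eventually (\<lambda>k. real ?m < qk k * ok k) sequentially"
      using order_tendstoD(1)[OF tk] Dm True by simp
    show ?thesis using ev e1
    proof eventually_elim
      case (elim k)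
      then show ?case unfolding D_def[symmetric] using True
        by (intro dig_eqI) auto
    qed
  next
    case False
    then have Dlt: "D < ?m" using Dm by simp
    have tD: "q * ov \<le> real D + 1" using dig_lt_max[OF q ov] Dlt unfolding D_def by simp
    show ?thesis
    proof (cases "q * ov < real D + 1")
      case True
      have e1: "eventually (\<lambda>k. real D < qk k * ok k) sequentially"
        using order_tendstoD(1)[OF tk] Dm by simp
      have e2: "eventually (\<lambda>k. qk k * ok k < real D + 1) sequentially"
        using order_tendstoD(2)[OF tk] True by simp
      show ?thesis using ev e1 e2
      proof eventually_elim
        case (elim k)
        then show ?case unfolding D_def[symmetric] using Dlt
          by (intro dig_eqI) auto
      qed
    next
      case False
      then have teq: "q * ov = real D + 1" using tD by simp
      have e1: "eventually (\<lambda>k. real D < qk k * ok k) sequentially"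
        using order_tendstoD(1)[OF tk] Dm by simp
      have "(\<lambda>k. qk k * ok k - (real D + 1)) \<longlonglongrightarrow> q * ov - (real D + 1)"
        by (intro tendsto_diff tk tendsto_const)
      then have t0: "(\<lambda>k. qk k * ok k - (real D + 1)) \<longlonglongrightarrow> 0" using teq by simp
      have pos: "0 < (MM q - 1) / 2" using M1 by simp
      have e2: "eventually (\<lambda>k. qk k * ok k - (real D + 1) < (MM q - 1) / 2) sequentially"
        by (rule order_tendstoD(2)[OF t0 pos])
      have ml: "(\<lambda>k. MM (qk k) - 1) \<longlonglongrightarrow> MM q - 1" by (intro tendsto_diff MMk tendsto_const)
      have lt: "(MM q - 1) / 2 < MM q - 1" using M1 by simp
      have e3: "eventually (\<lambda>k. (MM q - 1) / 2 < MM (qk k) - 1) sequentially"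
        by (rule order_tendstoD(1)[OF ml lt])
      show ?thesis using ev e1 e2 e3
      proof eventually_elim
        case (elim k)
        let ?d = "dig (qk k) (ok k)"
        have qk1: "qk k > 1" and okp: "ok k > 0" using elim by auto
        have "D \<le> ?d" using dig_props(3)[OF qk1 okp, of D] elim Dm by simp
        moreover have "real ?d < qk k * ok k" using dig_props(2)[OF qk1 okp] .
        then have "real ?d < real D + 2" using elim by linarith
        then have "?d \<le> D + 1" by simp
        moreover have "?d \<noteq> D + 1"
        proof
          assume dd: "?d = D + 1"
          then have "MM (qk k) - 1 < qk k * ok k - real (D + 1)" using elim by auto
          then show False using elim by simp
        qed
        ultimately show ?case unfolding D_def[symmetric] by simp
      qed
    qed
  qed
qed

lemma closure_imp_V:
  assumes J: "(x, q) \<in> setJ" and x: "x > 0" and cl: "(x, q) \<in> closure setU"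
    and dn: "0 < ds q x n"
  shows "MM q - 1 \<le> orb q x (Suc n)"
proof -
  have q: "q > 1" and xM: "x \<le> MM q" using J setJ_iff by auto
  show ?thesis
  proof (cases "of_int \<lceil>q\<rceil> = q")
    case True
    have "MM q = 1" unfolding MM_def using digmax_real[OF q] True q by simp
    then show ?thesis using orb_bounds[OF q x xM, of "Suc n"] by simp
  next
    case ni: False
    obtain s where s: "\<And>k. s k \<in> setU" "s \<longlonglongrightarrow> (x, q)"
      using cl unfolding closure_sequential by blast
    define xk where "xk = (\<lambda>k. fst (s k))"
    define qk where "qk = (\<lambda>k. snd (s k))"
    have sk: "s k = (xk k, qk k)" for k unfolding xk_def qk_def by simp
    have U: "(xk k, qk k) \<in> setU" for k using s(1)[of k] sk by simp
    have Jk: "qk k > 1" "0 \<le> xk k" "xk k \<le> MM (qk k)" for k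
      using U[of k] unfolding setU_def setJ_iff by auto
    have xl: "xk \<longlonglongrightarrow> x" unfolding xk_def using tendsto_fst[OF s(2)] by simp
    have ql: "qk \<longlonglongrightarrow> q" unfolding qk_def using tendsto_snd[OF s(2)] by simp
    have cq: "q < of_int \<lceil>q\<rceil>" using ni le_of_int_ceiling[of q] by linarith
    have cq2: "of_int \<lceil>q\<rceil> - 1 < q" using ceiling_correct[of q] by linarith
    have e1: "eventually (\<lambda>k. of_int \<lceil>q\<rceil> - 1 < qk k) sequentially"
      using order_tendstoD(1)[OF ql cq2] .
    have e2: "eventually (\<lambda>k. qk k < of_int \<lceil>q\<rceil>) sequentially"
      using order_tendstoD(2)[OF ql cq] .
    have edm: "eventually (\<lambda>k. digmax (qk k) = digmax q) sequentially"
      using e1 e2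
    proof eventually_elim
      case (elim k)
      then have "\<lceil>qk k\<rceil> = \<lceil>q\<rceil>" by (intro ceiling_unique) auto
      then show ?case unfolding digmax_def by simp
    qed
    have ex: "eventually (\<lambda>k. 0 < xk k) sequentially" using order_tendstoD(1)[OF xl x] .
    have MMk: "(\<lambda>k. MM (qk k)) \<longlonglongrightarrow> MM q"
    proof -
      have "(\<lambda>k. real (digmax q) / (qk k - 1)) \<longlonglongrightarrow> real (digmax q) / (q - 1)"
        using q by (intro tendsto_divide tendsto_const tendsto_diff ql) auto
      moreover have "eventually (\<lambda>k. real (digmax q) / (qk k - 1) = MM (qk k)) sequentially"
        using edm by eventually_elim (simp add: MM_def)
      ultimately show ?thesis unfolding MM_def[of q] by (rule Lim_transform_eventually)
    qed
    define ok where "ok = (\<lambda>n k. orb (qk k) (xk k) n)"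
    have okp: "eventually (\<lambda>k. 0 < ok n k) sequentially" for n
      using ex
    proof eventually_elim
      case (elim k)
      then show ?case unfolding ok_def using orb_bounds[OF Jk(1) elim Jk(3)] by blast
    qed
    have ev: "eventually (\<lambda>k. qk k > 1 \<and> digmax (qk k) = digmax q \<and> ok n k > 0 \<and>
        (dig (qk k) (ok n k) > 0 \<longrightarrow> MM (qk k) - 1 < qk k * ok n k - real (dig (qk k) (ok n k)))) sequentially" for n
      using edm okp[of n] ex
    proof eventually_elim
      case (elim k)
      have "0 < ds (qk k) (xk k) n \<Longrightarrow> MM (qk k) - 1 < orb (qk k) (xk k) (Suc n)"
        using unique_nec(2)[OF U elim(3)] .
      then show ?case using elim Jk(1)[of k] unfolding ok_def ds_def by simp
    qed
    have stab: "ok n \<longlonglongrightarrow> orb q x n \<Longrightarrow> eventually (\<lambda>k. dig (qk k) (ok n k) = dig q (orb q x n)) sequentially" for n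
      by (rule digit_stab[OF q ni ql _ orb_bounds[OF q x xM, THEN conjunct1] MMk ev])
    have lim: "ok n \<longlonglongrightarrow> orb q x n" for n
    proof (induction n)
      case 0
      then show ?case unfolding ok_def using xl by simp
    next
      case (Suc n)
      have "(\<lambda>k. qk k * ok n k - real (dig q (orb q x n))) \<longlonglongrightarrow> q * orb q x n - real (dig q (orb q x n))"
        by (intro tendsto_diff tendsto_mult ql Suc tendsto_const)
      moreover have "eventually (\<lambda>k. qk k * ok n k - real (dig q (orb q x n)) = ok (Suc n) k) sequentially"
        using stab[OF Suc] by eventually_elim (simp add: ok_def)
      ultimately show ?case by (simp add: Lim_transform_eventually)
    qed
    have "eventually (\<lambda>k. MM (qk k) - 1 \<le> ok (Suc n) k) sequentially"
      using stab[OF lim[of n]] ev[of n]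
    proof eventually_elim
      case (elim k)
      then show ?case using dn unfolding ds_def ok_def by simp
    qed
    moreover have "(\<lambda>k. MM (qk k) - 1) \<longlonglongrightarrow> MM q - 1" by (intro tendsto_diff MMk tendsto_const)
    ultimately show ?thesis using lim[of "Suc n"] by (intro tendsto_le[OF trivial_limit_sequentially]) auto
  qed
qed



lemma zero_in_U: assumes q: "q > 1" shows "(0, q) \<in> setU"
proof -
  have J: "(0, q) \<in> setJ" unfolding setJ_iff using q MM_ge1[OF q] by simp
  have ex: "is_expansion 0 q (\<lambda>_. 0)" unfolding is_expansion_def by simp
  have uq: "d = (\<lambda>_. 0)" if d: "is_expansion 0 q d" for d
  proof -
    have s: "(\<lambda>i. real (d i) / q ^ Suc i) sums 0" using d unfolding is_expansion_def by auto
    have "suminf (\<lambda>i. real (d i) / q ^ Suc i) = 0" using sums_unique[OF s] by simp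
    then have "\<forall>i. real (d i) / q ^ Suc i = 0"
      using suminf_eq_zero_iff[OF sums_summable[OF s]] q by simp
    then show ?thesis using q by auto
  qed
  show ?thesis unfolding setU_def using J ex uq by auto
qed

theorem theorem1p2:
  fixes x q :: real
  assumes "(x, q) \<in> setJ"
  shows "(x, q) \<in> closure setU \<longleftrightarrow>
    (\<forall>n\<ge>1. qg x q n > 0 \<longrightarrow>
       lex_le (\<lambda>i. alpha q 1 - qg x q (n + 1 + i)) (\<lambda>i. alpha q (1 + i)))"
proof -
  have q: "q > 1" and x0: "0 \<le> x" and xM: "x \<le> MM q" using assms setJ_iff by auto
  let ?R = "\<forall>n\<ge>1. qg x q n > 0 \<longrightarrow>
       lex_le (\<lambda>i. alpha q 1 - qg x q (n + 1 + i)) (\<lambda>i. alpha q (1 + i))"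
  have allS: "?R \<longleftrightarrow> (\<forall>n. qg x q (Suc n) > 0 \<longrightarrow>
       lex_le (\<lambda>i. alpha q 1 - qg x q (Suc n + 1 + i)) (\<lambda>i. alpha q (1 + i)))"
  proof
    assume R: ?R
    show "\<forall>n. qg x q (Suc n) > 0 \<longrightarrow>
       lex_le (\<lambda>i. alpha q 1 - qg x q (Suc n + 1 + i)) (\<lambda>i. alpha q (1 + i))"
    proof (intro allI impI)
      fix n assume "qg x q (Suc n) > 0"
      then show "lex_le (\<lambda>i. alpha q 1 - qg x q (Suc n + 1 + i)) (\<lambda>i. alpha q (1 + i))"
        using R[rule_format, of "Suc n"] by simp
    qed
  next
    assume H: "\<forall>n. qg x q (Suc n) > 0 \<longrightarrow>
       lex_le (\<lambda>i. alpha q 1 - qg x q (Suc n + 1 + i)) (\<lambda>i. alpha q (1 + i))"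
    show ?R
    proof (intro allI impI)
      fix n :: nat assume "n \<ge> 1" "qg x q n > 0"
      then obtain n' where nn: "n = Suc n'" by (cases n) auto
      show "lex_le (\<lambda>i. alpha q 1 - qg x q (n + 1 + i)) (\<lambda>i. alpha q (1 + i))"
        using H[rule_format, of n'] \<open>qg x q n > 0\<close> unfolding nn by simp
    qed
  qed
  have aS: "(\<lambda>i. alpha q (1 + i)) = ds q 1" using alpha_eq_ds[OF q] by auto
  have a1: "alpha q 1 = digmax q" by (rule alpha_one[OF q])
  show ?thesis
  proof (cases "x = 0")
    case True
    have "(x, q) \<in> closure setU" using zero_in_U[OF q] True closure_subset by blast
    moreover have ?R unfolding allS using True qg_zero by simp
    ultimately show ?thesis by simp
  next
    case False
    then have x: "x > 0" using x0 by simp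
    have qgds: "qg x q (Suc n) = ds q x n" for n using qg_eq_ds[OF assms x] .
    have tl: "(\<lambda>i. alpha q 1 - qg x q (Suc n + 1 + i)) = (\<lambda>i. digmax q - ds q x (Suc n + i))" for n
      using qgds a1 by simp
    have RC: "?R \<longleftrightarrow> (\<forall>n. 0 < ds q x n \<longrightarrow> lex_le (\<lambda>i. digmax q - ds q x (Suc n + i)) (ds q 1))"
    proof -
      have "?R \<longleftrightarrow> (\<forall>n. qg x q (Suc n) > 0 \<longrightarrow>
         lex_le (\<lambda>i. alpha q 1 - qg x q (Suc n + 1 + i)) (\<lambda>i. alpha q (1 + i)))" by (rule allS)
      also have "\<dots> \<longleftrightarrow> (\<forall>n. 0 < ds q x n \<longrightarrow> lex_le (\<lambda>i. digmax q - ds q x (Suc n + i)) (ds q 1))"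
        by (simp only: tl aS qgds)
      finally show ?thesis .
    qed
    show ?thesis
    proof
      assume cl: "(x, q) \<in> closure setU"
      have V: "\<And>n. 0 < ds q x n \<Longrightarrow> MM q - 1 \<le> orb q x (Suc n)"
        using closure_imp_V[OF assms x cl] .
      show ?R unfolding RC using V_imp_C[OF q x xM V] by blast
    next
      assume ?R
      then have C: "\<And>n. 0 < ds q x n \<Longrightarrow> lex_le (\<lambda>i. digmax q - ds q x (Suc n + i)) (ds q 1)"
        unfolding RC by blast
      show "(x, q) \<in> closure setU"
      proof (cases "of_int \<lceil>q\<rceil> = q")
        case True then show ?thesis by (rule closure_int[OF assms])
      next
        case False then show ?thesis by (rule closure_nonint[OF assms x _ C])
      qed
    qed
  qed
qed


end
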